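(* Let $T\ge 1$ and $n_w\ge 0$ be integers, let $C>0$, and let $q_1,\dots,q_T\in\mathbb{R}$. For $\mathbf{u}=(u_1,\dots,u_T)\in\mathbb{R}^T$ and $i=1,\dots,T$ write $\mathbf{u}_i=(u_{i-n_w},\dots,u_i)$, where entries with index $\le 0$ are fixed constants (not decision variables). Let $J_i:\mathbb{R}\to\mathbb{R}$ ($i=1,\dots,T$) be continuously differentiable and increasing, and let $f_i:\mathbb{R}^{n_w+1}\to\mathbb{R}$ ($i=1,\dots,T$) be continuously differentiable and non-decreasing in each of their arguments. Define the penalty function $$\hat J(\mathbf{u})=\sum_{i=1}^T\Big(J_i(u_i)+C\big(f_i(\mathbf{u}_i)-q_i\big)^2\Big)$$ on $\mathbb{R}^T$. Then at any (unconstrained, local) minimum $\mathbf{u}^*$ of $\hat J$, at least one of the inequality constraints $f_i(\mathbf{u}^*_i)-q_i\ge 0$, $i=1,\dots,T$, is violated.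
   Context: "Increasing" for a differentiable function means its derivative is strictly positive; "non-decreasing" means all its partial derivatives are non-negative. The penalty function arises from the constrained problem $\min J(\mathbf{u})=\sum_i J_i(u_i)$ subject to $f_i(\mathbf{u}_i)\ge q_i$, $i=1,\dots,T$. *)

theory Defs
  imports "HOL-Analysis.Analysis"
begin

definition ext_seq :: "(int \<Rightarrow> real) \<Rightarrow> (nat \<Rightarrow> real) \<Rightarrow> int \<Rightarrow> real" where
  "ext_seq c u k = (if k \<le> 0 then c k else u (nat k))"

text \<open>The window u_i = (u_{i-n_w}, ..., u_i) as a vector in R^{n_w+1}; the coordinates
  of the index type 'w are labelled 0..n_w by the bijection idx, coordinate with
  label m holding u_{i-n_w+m}.\<close>
definition window :: "('w::finite \<Rightarrow> nat) \<Rightarrow> nat \<Rightarrow> (int \<Rightarrow> real) \<Rightarrow> (nat \<Rightarrow> real) \<Rightarrow> nat \<Rightarrow> real ^ 'w" where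
  "window idx n_w c u i = (\<chi> w. ext_seq c u (int i - int n_w + int (idx w)))"

definition Jhat :: "nat \<Rightarrow> real \<Rightarrow> (nat \<Rightarrow> real \<Rightarrow> real) \<Rightarrow> (nat \<Rightarrow> real ^ 'w \<Rightarrow> real)
     \<Rightarrow> (nat \<Rightarrow> real) \<Rightarrow> ('w::finite \<Rightarrow> nat) \<Rightarrow> nat \<Rightarrow> (int \<Rightarrow> real) \<Rightarrow> (nat \<Rightarrow> real) \<Rightarrow> real" where
  "Jhat T C J f q idx n_w c u =
     (\<Sum>i=1..T. J i (u i) + C * (f i (window idx n_w c u i) - q i)^2)"

definition local_min_T :: "nat \<Rightarrow> ((nat \<Rightarrow> real) \<Rightarrow> real) \<Rightarrow> (nat \<Rightarrow> real) \<Rightarrow> bool" where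
  "local_min_T T F u \<longleftrightarrow> (\<exists>e>0. \<forall>v. (\<forall>j\<in>{1..T}. \<bar>v j - u j\<bar> < e) \<longrightarrow> F u \<le> F v)"

end

theory Submission
  imports Defs
begin

theorem proposition2:
  fixes T n_w :: nat and C :: real and q :: "nat \<Rightarrow> real"
    and J :: "nat \<Rightarrow> real \<Rightarrow> real" and J' :: "nat \<Rightarrow> real \<Rightarrow> real"
    and f :: "nat \<Rightarrow> real ^ 'w::finite \<Rightarrow> real"
    and f' :: "nat \<Rightarrow> real ^ 'w \<Rightarrow> real ^ 'w \<Rightarrow> real"
    and idx :: "'w \<Rightarrow> nat" and c :: "int \<Rightarrow> real" and u :: "nat \<Rightarrow> real"
  assumes T: "T \<ge> 1" and Cpos: "C > 0"
    and idx: "bij_betw idx UNIV {..n_w}"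
    and J_deriv: "\<And>i x. i \<in> {1..T} \<Longrightarrow> (J i has_real_derivative J' i x) (at x)"
    and J'_cont: "\<And>i. i \<in> {1..T} \<Longrightarrow> continuous_on UNIV (J' i)"
    and J_incr: "\<And>i x. i \<in> {1..T} \<Longrightarrow> J' i x > 0"
    and f_deriv: "\<And>i x. i \<in> {1..T} \<Longrightarrow> (f i has_derivative f' i x) (at x)"
    and f'_cont: "\<And>i v. i \<in> {1..T} \<Longrightarrow> continuous_on UNIV (\<lambda>x. f' i x v)"
    and f_nondec: "\<And>i x k. i \<in> {1..T} \<Longrightarrow> f' i x (axis k 1) \<ge> 0"
    and min: "local_min_T T (Jhat T C J f q idx n_w c) u"
  shows "\<exists>i\<in>{1..T}. f i (window idx n_w c u i) - q i < 0"
proof (rule ccontr)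
  assume "\<not> ?thesis"
  hence nonneg: "\<And>i. i \<in> {1..T} \<Longrightarrow> f i (window idx n_w c u i) - q i \<ge> 0" by force
  have TT: "T \<in> {1..T}" using T by simp
  obtain w0 where w0: "idx w0 = n_w" using idx unfolding bij_betw_def by (metis atMost_iff imageE order_refl)
  have idx_le: "idx w \<le> n_w" for w using idx unfolding bij_betw_def by auto
  have idx_lt: "w \<noteq> w0 \<Longrightarrow> idx w < n_w" for w
    using idx w0 idx_le[of w] unfolding bij_betw_def inj_def by (metis le_neq_implies_less)
  define x where "x = window idx n_w c u T"
  define a where "a = (axis w0 1 :: real ^ 'w)"
  define g where "g = (\<lambda>t. f T (x - t *\<^sub>R a))"
  define K where "K = (\<Sum>i\<in>{1..T-1}. J i (u i) + C * (f i (window idx n_w c u i) - q i)^2)"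
  define H where "H = (\<lambda>t. Jhat T C J f q idx n_w c (u(T := u T - t)))"
  have win_other: "window idx n_w c (u(T := s)) i = window idx n_w c u i" if "i \<in> {1..T-1}" for i s
  proof -
    have "int i - int n_w + int (idx w) \<noteq> int T" for w using that idx_le[of w] by auto
    then show ?thesis using that unfolding window_def ext_seq_def vec_eq_iff
      by (auto simp: nat_eq_iff)
  qed
  have win_T: "window idx n_w c (u(T := u T - t)) T = x - t *\<^sub>R a" for t
  proof -
    have "(window idx n_w c (u(T := u T - t)) T) $ w = (x - t *\<^sub>R a) $ w" for w
    proof (cases "w = w0")
      case True
      then show ?thesis using T w0 unfolding x_def a_def window_def ext_seq_def by (simp add: axis_def)
    next
      case False
      then have "idx w < n_w" by (rule idx_lt)
      then show ?thesis using False unfolding x_def a_def window_def ext_seq_def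
        by (auto simp: axis_def nat_eq_iff)
    qed
    then show ?thesis by (simp add: vec_eq_iff)
  qed
  have split: "{1..T} = insert T {1..T-1}" using T by auto
  have H_eq: "H t = K + (J T (u T - t) + C * (g t - q T)^2)" for t
  proof -
    have "H t = (\<Sum>i\<in>insert T {1..T-1}. J i ((u(T := u T - t)) i) + C * (f i (window idx n_w c (u(T := u T - t)) i) - q i)^2)"
      unfolding H_def Jhat_def split ..
    also have "\<dots> = (J T (u T - t) + C * (g t - q T)^2) + (\<Sum>i\<in>{1..T-1}. J i ((u(T := u T - t)) i) + C * (f i (window idx n_w c (u(T := u T - t)) i) - q i)^2)"
      using T by (subst sum.insert) (auto simp: win_T g_def)
    also have "(\<Sum>i\<in>{1..T-1}. J i ((u(T := u T - t)) i) + C * (f i (window idx n_w c (u(T := u T - t)) i) - q i)^2) = K"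
      unfolding K_def by (rule sum.cong) (auto simp: win_other)
    finally show ?thesis by simp
  qed
  have H0: "H 0 = Jhat T C J f q idx n_w c u" unfolding H_def by simp
  have gd: "(g has_real_derivative (- f' T x a)) (at 0)"
  proof -
    have l: "linear (f' T x)" using f_deriv[OF TT] has_derivative_linear by blast
    have p: "((\<lambda>t. x - t *\<^sub>R a) has_derivative (\<lambda>h. - (h *\<^sub>R a))) (at 0)"
      by (auto intro!: derivative_eq_intros)
    have "((\<lambda>t. f T (x - t *\<^sub>R a)) has_derivative (\<lambda>h. f' T x (- (h *\<^sub>R a)))) (at 0)"
      using has_derivative_compose[OF p, of "f T" "f' T x"] f_deriv[OF TT, of x] by simp
    moreover have "(\<lambda>h. f' T x (- (h *\<^sub>R a))) = (*) (- f' T x a)"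
      using l by (auto simp: linear_cmul linear_neg)
    ultimately show ?thesis unfolding g_def has_field_derivative_def by metis
  qed
  have g0: "g 0 = f T x" unfolding g_def by simp
  have Jd: "((\<lambda>t. J T (u T - t)) has_real_derivative (J' T (u T) * (-1))) (at 0)"
  proof -
    have i: "((\<lambda>t. u T - t) has_real_derivative (-1)) (at 0)"
      by (auto intro!: derivative_eq_intros)
    have "(J T has_real_derivative J' T (u T)) (at ((\<lambda>t. u T - t) 0))"
      using J_deriv[OF TT, of "u T"] by simp
    from DERIV_chain2[OF this i] show ?thesis by simp
  qed
  have Hd: "(H has_real_derivative (J' T (u T) * (-1) + C * (2 * (g 0 - q T) * (- f' T x a)))) (at 0)"
  proof -
    have "((\<lambda>t. (g t - q T)^2) has_real_derivative (2 * (g 0 - q T) * (- f' T x a))) (at 0)"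
      using DERIV_power[OF DERIV_diff[OF gd DERIV_const[of "q T"]], of 2]
      by (simp add: algebra_simps)
    then have "((\<lambda>t. K + (J T (u T - t) + C * (g t - q T)^2)) has_real_derivative
        (0 + (J' T (u T) * (-1) + C * (2 * (g 0 - q T) * (- f' T x a))))) (at 0)"
      by (intro DERIV_add DERIV_const Jd DERIV_cmult)
    moreover have "H = (\<lambda>t. K + (J T (u T - t) + C * (g t - q T)^2))" using H_eq by (rule ext)
    ultimately show ?thesis by simp
  qed
  have neg: "J' T (u T) * (-1) + C * (2 * (g 0 - q T) * (- f' T x a)) < 0"
  proof -
    have "g 0 - q T \<ge> 0" using nonneg[OF TT] g0 x_def by simp
    moreover have "f' T x a \<ge> 0" unfolding a_def by (rule f_nondec[OF TT])
    ultimately have "C * (2 * (g 0 - q T) * f' T x a) \<ge> 0" using Cpos by simp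
    then show ?thesis using J_incr[OF TT, of "u T"] by simp
  qed
  obtain d where d: "d > 0" "\<And>h. h > 0 \<Longrightarrow> h < d \<Longrightarrow> H (0 + h) < H 0"
    using DERIV_neg_dec_right[OF Hd neg] by blast
  obtain e where e: "e > 0" "\<And>v. (\<forall>j\<in>{1..T}. \<bar>v j - u j\<bar> < e) \<Longrightarrow> Jhat T C J f q idx n_w c u \<le> Jhat T C J f q idx n_w c v"
    using min unfolding local_min_T_def by blast
  define t where "t = min d e / 2"
  have t: "t > 0" "t < d" "t < e" using d e unfolding t_def by auto
  have "Jhat T C J f q idx n_w c u \<le> H t"
    unfolding H_def by (rule e(2)) (use t in auto)
  moreover have "H t < H 0" using d(2)[OF t(1,2)] by simp
  ultimately show False using H0 by simp
qed

end
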